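(* Let $p,k$ be fixed positive integers. There exists $r_0$ such that for every $r\geq r_0$, every $r$-uniform hypergraph $\mathcal H$ with $\Delta_p(\mathcal H)\leq k$ admits a $p$-equitable orientation.
   Context: An $r$-uniform hypergraph $\mathcal H$ is a finite set of $r$-element subsets (edges) of a finite vertex set $V(\mathcal H)$. An orientation of $\mathcal H$ assigns to every edge $S\in\mathcal H$ a bijection $\sigma_S:S\to[r]=\{1,\dots,r\}$ (a total order on its elements). For $U\subseteq V(\mathcal H)$ and $P\subseteq[r]$ with $|U|=|P|$, the degree of $U$ with respect to the set of positions $P$ is $d_P(U)=|\{S\in\mathcal H: U\subseteq S \text{ and } \sigma_S(U)=P\}|$. The orientation is $p$-equitable if $|d_P(U)-d_{P'}(U)|\leq 1$ for every $U\subseteq V(\mathcal H)$ and all $P,P'\subseteq[r]$ with $|U|=|P|=|P'|=p$. Finally, $\Delta_p(\mathcal H)=\max_{U\subseteq V(\mathcal H),\,|U|=p}|\{S\in\mathcal H: U\subseteq S\}|$. *)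

theory Defs
  imports Main
begin

text \<open>The vertex set is taken to be the union of the edges (vertices outside all edges
  have all degrees zero and do not affect any notion below).\<close>
definition uniform_hypergraph :: "nat \<Rightarrow> 'a set set \<Rightarrow> bool" where
  "uniform_hypergraph r H \<longleftrightarrow> finite H \<and> (\<forall>S\<in>H. finite S \<and> card S = r)"

definition vertices :: "'a set set \<Rightarrow> 'a set" where
  "vertices H = \<Union>H"

definition orientation :: "nat \<Rightarrow> 'a set set \<Rightarrow> ('a set \<Rightarrow> 'a \<Rightarrow> nat) \<Rightarrow> bool" where
  "orientation r H \<sigma> \<longleftrightarrow> (\<forall>S\<in>H. bij_betw (\<sigma> S) S {1..r})"

definition pos_degree :: "'a set set \<Rightarrow> ('a set \<Rightarrow> 'a \<Rightarrow> nat) \<Rightarrow> nat set \<Rightarrow> 'a set \<Rightarrow> nat" where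
  "pos_degree H \<sigma> P U = card {S\<in>H. U \<subseteq> S \<and> \<sigma> S ` U = P}"

definition p_equitable :: "nat \<Rightarrow> nat \<Rightarrow> 'a set set \<Rightarrow> ('a set \<Rightarrow> 'a \<Rightarrow> nat) \<Rightarrow> bool" where
  "p_equitable p r H \<sigma> \<longleftrightarrow>
     (\<forall>U P P'. U \<subseteq> vertices H \<and> P \<subseteq> {1..r} \<and> P' \<subseteq> {1..r} \<and>
        card U = p \<and> card P = p \<and> card P' = p \<longrightarrow>
        \<bar>int (pos_degree H \<sigma> P U) - int (pos_degree H \<sigma> P' U)\<bar> \<le> 1)"

definition max_p_degree :: "nat \<Rightarrow> 'a set set \<Rightarrow> nat" where
  "max_p_degree p H = Max ({card {S\<in>H. U \<subseteq> S} | U. U \<subseteq> vertices H \<and> card U = p} \<union> {0})"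

end

theory Submission
  imports Defs Complex_Main "HOL-Library.FuncSet"
begin

definition avoid :: "'w set \<Rightarrow> ('i \<Rightarrow> 'w set) \<Rightarrow> 'i set \<Rightarrow> 'w set" where
  "avoid \<Omega> A J = {w \<in> \<Omega>. \<forall>j\<in>J. w \<notin> A j}"

lemma avoid_anti: "J2 \<subseteq> J \<Longrightarrow> avoid \<Omega> A J \<subseteq> avoid \<Omega> A J2"
  unfolding avoid_def by auto

lemma lll_key:
  fixes \<Omega> :: "'w set" and E :: "'i set" and A :: "'i \<Rightarrow> 'w set" and N :: "'i \<Rightarrow> 'i set"
  assumes finO: "finite \<Omega>" and finE: "finite E"
  and dN: "\<And>i. i \<in> E \<Longrightarrow> finite (N i) \<and> card (N i) \<le> d"
  and lop: "\<And>i J. i \<in> E \<Longrightarrow> J \<subseteq> E - N i - {i} \<Longrightarrow>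
      real (card (A i \<inter> avoid \<Omega> A J)) \<le> \<epsilon> * real (card (avoid \<Omega> A J))"
  and eps: "0 \<le> \<epsilon>" "4 * \<epsilon> * d \<le> 1"
  shows "J \<subseteq> E \<Longrightarrow> i \<in> E - J \<Longrightarrow>
     real (card (A i \<inter> avoid \<Omega> A J)) \<le> 2 * \<epsilon> * real (card (avoid \<Omega> A J))"
proof (induction "card J" arbitrary: J i rule: less_induct)
  case less
  define J1 where "J1 = J \<inter> N i"
  define J2 where "J2 = J - N i"
  have iE: "i \<in> E" using less.prems by auto
  have finJ: "finite J" using less.prems finE finite_subset by blast
  have J2sub: "J2 \<subseteq> E - N i - {i}" using less.prems unfolding J2_def by auto
  have l1: "real (card (A i \<inter> avoid \<Omega> A J2)) \<le> \<epsilon> * real (card (avoid \<Omega> A J2))"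
    using lop[OF iE J2sub] .
  have sub: "avoid \<Omega> A J \<subseteq> avoid \<Omega> A J2" by (rule avoid_anti) (auto simp: J2_def)
  have finA2: "finite (avoid \<Omega> A J2)" using finO unfolding avoid_def by auto
  have c1: "card (A i \<inter> avoid \<Omega> A J) \<le> card (A i \<inter> avoid \<Omega> A J2)"
    using sub finA2 by (intro card_mono) auto
  show ?case
  proof (cases "J1 = {}")
    case True
    then have "J2 = J" unfolding J1_def J2_def by auto
    moreover have "\<epsilon> * real (card (avoid \<Omega> A J2)) \<le> 2 * \<epsilon> * real (card (avoid \<Omega> A J2))"
      using eps by (intro mult_right_mono) auto
    ultimately show ?thesis using l1 c1 by (metis (mono_tags, opaque_lifting) dual_order.trans of_nat_le_iff)
  next
    case False
    have J2lt: "card J2 < card J"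
    proof -
      have "J2 \<subset> J" using False unfolding J1_def J2_def by auto
      then show ?thesis using finJ psubset_card_mono by blast
    qed
    have IH: "\<And>j. j \<in> J1 \<Longrightarrow> real (card (A j \<inter> avoid \<Omega> A J2)) \<le> 2 * \<epsilon> * real (card (avoid \<Omega> A J2))"
    proof -
      fix j assume "j \<in> J1"
      then have "J2 \<subseteq> E" "j \<in> E - J2" using less.prems unfolding J1_def J2_def by auto
      then show "real (card (A j \<inter> avoid \<Omega> A J2)) \<le> 2 * \<epsilon> * real (card (avoid \<Omega> A J2))"
        using less.hyps[OF J2lt] by blast
    qed
    have finJ1: "finite J1" using finJ unfolding J1_def by auto
    have cJ1: "card J1 \<le> d"
    proof -
      have "card J1 \<le> card (N i)" using dN[OF iE] unfolding J1_def by (intro card_mono) auto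
      then show ?thesis using dN[OF iE] by linarith
    qed
    have diff: "avoid \<Omega> A J2 \<subseteq> avoid \<Omega> A J \<union> (\<Union>j\<in>J1. A j \<inter> avoid \<Omega> A J2)"
      unfolding avoid_def J1_def J2_def by auto
    have "card (avoid \<Omega> A J2) \<le> card (avoid \<Omega> A J \<union> (\<Union>j\<in>J1. A j \<inter> avoid \<Omega> A J2))"
      using diff finA2 finJ1 finO by (intro card_mono) (auto simp: avoid_def)
    also have "\<dots> \<le> card (avoid \<Omega> A J) + card (\<Union>j\<in>J1. A j \<inter> avoid \<Omega> A J2)"
      by (rule card_Un_le)
    also have "\<dots> \<le> card (avoid \<Omega> A J) + (\<Sum>j\<in>J1. card (A j \<inter> avoid \<Omega> A J2))"
      by (rule add_left_mono, rule card_UN_le[OF finJ1])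
    finally have "real (card (avoid \<Omega> A J2)) \<le> real (card (avoid \<Omega> A J)) + (\<Sum>j\<in>J1. real (card (A j \<inter> avoid \<Omega> A J2)))"
      unfolding of_nat_le_iff[symmetric, where 'a=real] by simp
    also have "(\<Sum>j\<in>J1. real (card (A j \<inter> avoid \<Omega> A J2))) \<le> (\<Sum>j\<in>J1. 2 * \<epsilon> * real (card (avoid \<Omega> A J2)))"
      using IH by (intro sum_mono) auto
    also have "\<dots> = real (card J1) * (2 * \<epsilon> * real (card (avoid \<Omega> A J2)))" by simp
    also have "\<dots> \<le> real d * (2 * \<epsilon> * real (card (avoid \<Omega> A J2)))"
      using cJ1 eps by (intro mult_right_mono) auto
    finally have key: "real (card (avoid \<Omega> A J2)) \<le> real (card (avoid \<Omega> A J)) + real d * (2 * \<epsilon> * real (card (avoid \<Omega> A J2)))"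
      by linarith
    have "real d * (2 * \<epsilon> * real (card (avoid \<Omega> A J2))) \<le> (1/2) * real (card (avoid \<Omega> A J2))"
    proof -
      have "real d * (2 * \<epsilon>) \<le> 1/2" using eps by (simp add: algebra_simps)
      then have "real d * (2 * \<epsilon>) * real (card (avoid \<Omega> A J2)) \<le> 1/2 * real (card (avoid \<Omega> A J2))"
        by (intro mult_right_mono) auto
      then show ?thesis by (simp add: mult.assoc)
    qed
    with key have "real (card (avoid \<Omega> A J2)) \<le> 2 * real (card (avoid \<Omega> A J))" by linarith
    then have "\<epsilon> * real (card (avoid \<Omega> A J2)) \<le> 2 * \<epsilon> * real (card (avoid \<Omega> A J))"
      using eps by (metis mult.assoc mult_left_mono mult.commute)
    then show ?thesis using l1 c1 by (meson dual_order.trans of_nat_le_iff)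
  qed
qed

lemma lll:
  fixes \<Omega> :: "'w set" and E :: "'i set" and A :: "'i \<Rightarrow> 'w set" and N :: "'i \<Rightarrow> 'i set"
  assumes finO: "finite \<Omega>" and nonempty: "\<Omega> \<noteq> {}" and finE: "finite E"
  and dN: "\<And>i. i \<in> E \<Longrightarrow> finite (N i) \<and> card (N i) \<le> d"
  and lop: "\<And>i J. i \<in> E \<Longrightarrow> J \<subseteq> E - N i - {i} \<Longrightarrow>
      real (card (A i \<inter> avoid \<Omega> A J)) \<le> \<epsilon> * real (card (avoid \<Omega> A J))"
  and eps: "0 \<le> \<epsilon>" "4 * \<epsilon> * d \<le> 1" "2 * \<epsilon> < 1"
  shows "avoid \<Omega> A E \<noteq> {}"
proof -
  have "J \<subseteq> E \<Longrightarrow> (1 - 2*\<epsilon>) ^ card J * real (card \<Omega>) \<le> real (card (avoid \<Omega> A J))" for J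
  proof (induction J rule: infinite_finite_induct)
    case (infinite J)
    then show ?case using finE finite_subset by blast
  next
    case empty
    then show ?case by (simp add: avoid_def)
  next
    case (insert i J)
    have key: "real (card (A i \<inter> avoid \<Omega> A J)) \<le> 2 * \<epsilon> * real (card (avoid \<Omega> A J))"
      using lll_key[OF finO finE dN lop eps(1,2), where J=J and i=i] insert by auto
    have fa: "finite (avoid \<Omega> A J)" using finO unfolding avoid_def by auto
    have eq: "avoid \<Omega> A (insert i J) = avoid \<Omega> A J - (A i \<inter> avoid \<Omega> A J)"
      unfolding avoid_def by auto
    have "card (avoid \<Omega> A (insert i J)) = card (avoid \<Omega> A J) - card (A i \<inter> avoid \<Omega> A J)"
      unfolding eq using fa by (intro card_Diff_subset) auto
    moreover have "card (A i \<inter> avoid \<Omega> A J) \<le> card (avoid \<Omega> A J)" using fa by (intro card_mono) auto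
    ultimately have c: "real (card (avoid \<Omega> A (insert i J))) = real (card (avoid \<Omega> A J)) - real (card (A i \<inter> avoid \<Omega> A J))"
      by (metis of_nat_diff)
    have ih: "(1 - 2*\<epsilon>) ^ card J * real (card \<Omega>) \<le> real (card (avoid \<Omega> A J))" using insert by auto
    have "(1 - 2*\<epsilon>) ^ card (insert i J) * real (card \<Omega>) = (1 - 2*\<epsilon>) * ((1 - 2*\<epsilon>) ^ card J * real (card \<Omega>))"
      using insert by simp
    also have "\<dots> \<le> (1 - 2*\<epsilon>) * real (card (avoid \<Omega> A J))" using ih eps by (intro mult_left_mono) auto
    also have "\<dots> \<le> real (card (avoid \<Omega> A (insert i J)))" using c key by (simp add: algebra_simps)
    finally show ?case .
  qed
  from this[of E] have "(1 - 2*\<epsilon>) ^ card E * real (card \<Omega>) \<le> real (card (avoid \<Omega> A E))" by simp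
  moreover have "0 < (1 - 2*\<epsilon>) ^ card E * real (card \<Omega>)"
    using eps finO nonempty by (simp add: card_gt_0_iff)
  ultimately have "card (avoid \<Omega> A E) > 0" by linarith
  then show ?thesis by auto
qed


lemma swap_perm:
  assumes fQ: "finite Q" and fQ': "finite Q'" and cq: "card Q = card Q'"
  shows "\<exists>\<pi>::nat\<Rightarrow>nat. inj \<pi> \<and> \<pi> ` Q = Q' \<and> (\<forall>x. x \<notin> Q \<union> Q' \<longrightarrow> \<pi> x = x) \<and> (\<forall>x\<in>Q'-Q. \<pi> x \<in> Q)"
proof -
  have "card (Q - Q') = card (Q' - Q)"
    using card_Diff_subset_Int[of Q Q'] card_Diff_subset_Int[of Q' Q] fQ fQ' cq
    by (simp add: Int_commute)
  then obtain h where h: "bij_betw h (Q - Q') (Q' - Q)"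
    using finite_same_card_bij fQ fQ' by (meson finite_Diff)
  define g where "g = the_inv_into (Q - Q') h"
  have g: "bij_betw g (Q' - Q) (Q - Q')" unfolding g_def using h bij_betw_the_inv_into by blast
  have gh: "\<And>x. x \<in> Q' - Q \<Longrightarrow> h (g x) = x"
    unfolding g_def using h by (simp add: bij_betw_def f_the_inv_into_f)
  define \<pi> where "\<pi> x = (if x \<in> Q - Q' then h x else if x \<in> Q' - Q then g x else x)" for x
  have hin: "\<And>x. x \<in> Q - Q' \<Longrightarrow> h x \<in> Q' - Q" using h bij_betwE by blast
  have gin: "\<And>x. x \<in> Q' - Q \<Longrightarrow> g x \<in> Q - Q'" using g bij_betwE by blast
  have hinj: "inj_on h (Q - Q')" using h bij_betw_imp_inj_on by blast
  have ginj: "inj_on g (Q' - Q)" using g bij_betw_imp_inj_on by blast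
  have pa: "\<And>x. x \<in> Q - Q' \<Longrightarrow> \<pi> x = h x" unfolding \<pi>_def by simp
  have pb: "\<And>x. x \<in> Q' - Q \<Longrightarrow> \<pi> x = g x" unfolding \<pi>_def by auto
  have pc: "\<And>x. x \<notin> Q - Q' \<Longrightarrow> x \<notin> Q' - Q \<Longrightarrow> \<pi> x = x" unfolding \<pi>_def by presburger
  have cls: "\<And>x. (x \<in> Q - Q' \<and> \<pi> x \<in> Q' - Q) \<or> (x \<in> Q' - Q \<and> \<pi> x \<in> Q - Q') \<or>
       (x \<notin> Q - Q' \<and> x \<notin> Q' - Q \<and> \<pi> x = x)"
  proof -
    fix x
    show "(x \<in> Q - Q' \<and> \<pi> x \<in> Q' - Q) \<or> (x \<in> Q' - Q \<and> \<pi> x \<in> Q - Q') \<or>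
       (x \<notin> Q - Q' \<and> x \<notin> Q' - Q \<and> \<pi> x = x)"
    proof (cases "x \<in> Q - Q'")
      case True then show ?thesis using pa hin by simp
    next
      case False
      show ?thesis
      proof (cases "x \<in> Q' - Q")
        case True then show ?thesis using pb gin False by simp
      next
        case F2: False then show ?thesis using pc False by simp
      qed
    qed
  qed
  have inj: "inj \<pi>"
  proof (rule injI)
    fix x y assume e: "\<pi> x = \<pi> y"
    show "x = y"
    proof (cases "x \<in> Q - Q'")
      case True
      have px: "\<pi> x \<in> Q' - Q" using True pa hin by simp
      have yin: "y \<in> Q - Q'"
      proof (rule ccontr)
        assume ny: "y \<notin> Q - Q'"
        show False
        proof (cases "y \<in> Q' - Q")
          case True then have "\<pi> y \<in> Q - Q'" using pb gin by simp
          then show False using px e by auto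
        next
          case False then have "\<pi> y = y" using pc ny by simp
          then show False using px e False by simp
        qed
      qed
      then have hh: "h x = h y" using e True pa by simp
      show ?thesis using inj_onD[OF hinj hh True yin] .
    next
      case F1: False
      show ?thesis
      proof (cases "x \<in> Q' - Q")
        case True
        have px: "\<pi> x \<in> Q - Q'" using True pb gin by simp
        have yin: "y \<in> Q' - Q"
        proof (rule ccontr)
          assume ny: "y \<notin> Q' - Q"
          show False
          proof (cases "y \<in> Q - Q'")
            case True then have "\<pi> y \<in> Q' - Q" using pa hin by simp
            then show False using px e by auto
          next
            case False then have "\<pi> y = y" using pc ny by simp
            then show False using px e False by simp
          qed
        qed
        then have gg: "g x = g y" using e True pb by simp
        show ?thesis using inj_onD[OF ginj gg True yin] .
      next
        case False
        then have px: "\<pi> x = x" using pc F1 by simp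
        show ?thesis
        proof (cases "y \<in> Q - Q'")
          case True then have "\<pi> y \<in> Q' - Q" using pa hin by simp
          then show ?thesis using px e False by simp
        next
          case F3: False
          show ?thesis
          proof (cases "y \<in> Q' - Q")
            case True then have "\<pi> y \<in> Q - Q'" using pb gin by simp
            then show ?thesis using px e F1 by simp
          next
            case False then have "\<pi> y = y" using pc F3 by simp
            then show ?thesis using px e by simp
          qed
        qed
      qed
    qed
  qed
  have img: "\<pi> ` Q = Q'"
  proof
    show "\<pi> ` Q \<subseteq> Q'"
    proof
      fix y assume "y \<in> \<pi> ` Q"
      then obtain x where x: "x \<in> Q" "y = \<pi> x" by auto
      then show "y \<in> Q'" using cls[of x] by auto
    qed
    show "Q' \<subseteq> \<pi> ` Q"
    proof
      fix y assume y: "y \<in> Q'"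
      show "y \<in> \<pi> ` Q"
      proof (cases "y \<in> Q")
        case True
        then have "\<pi> y = y" using pc y by simp
        then show ?thesis using True by force
      next
        case False
        then have "g y \<in> Q - Q'" "\<pi> (g y) = y" using gin gh y pa by auto
        then show ?thesis by force
      qed
    qed
  qed
  have fx: "\<forall>x. x \<notin> Q \<union> Q' \<longrightarrow> \<pi> x = x" using pc by simp
  have bk: "\<forall>x\<in>Q'-Q. \<pi> x \<in> Q" using pb gin by auto
  show ?thesis using inj img fx bk by blast
qed

lemma perm_bij:
  fixes \<pi> :: "nat \<Rightarrow> nat"
  assumes "inj \<pi>" "\<pi> ` Q = Q'" "\<forall>x. x \<notin> Q \<union> Q' \<longrightarrow> \<pi> x = x" "\<forall>x\<in>Q'-Q. \<pi> x \<in> Q"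
    "Q \<subseteq> {1..r}" "Q' \<subseteq> {1..r}"
  shows "bij_betw \<pi> {1..r} {1..r}"
proof -
  have sub: "\<pi> ` {1..r} \<subseteq> {1..r}"
  proof
    fix y assume "y \<in> \<pi> ` {1..r}"
    then obtain x where x: "x \<in> {1..r}" "y = \<pi> x" by auto
    show "y \<in> {1..r}"
    proof (cases "x \<in> Q \<union> Q'")
      case True
      then show ?thesis using assms x by blast
    next
      case False
      then show ?thesis using assms x by auto
    qed
  qed
  have injo: "inj_on \<pi> {1..r}" using assms(1) by (meson inj_on_subset subset_UNIV)
  have "card (\<pi> ` {1..r}) = card {1..r}" using injo by (simp add: card_image)
  then have "\<pi> ` {1..r} = {1..r}" using sub by (intro card_subset_eq) auto
  then show ?thesis using injo unfolding bij_betw_def by auto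
qed

lemma switch_coord:
  fixes \<pi> :: "nat \<Rightarrow> nat"
  assumes fixout: "\<forall>x. x \<notin> Q \<union> Q1 \<longrightarrow> \<pi> x = x" and bk: "\<forall>x\<in>Q1-Q. \<pi> x \<in> Q"
  and finj: "inj_on f X" and UX: "U \<subseteq> X" and U'X: "U' \<subseteq> X" and fU: "f ` U = Q"
  and dU: "U \<inter> U' = {}" and dQ: "Q \<inter> Q' = {}" and e: "\<pi> ` f ` U' = Q'"
  shows "f ` U' = Q'"
proof -
  have W: "f ` U' \<inter> Q = {}"
  proof -
    have "f ` U' \<inter> f ` U = f ` (U' \<inter> U)"
      using finj UX U'X by (metis inj_on_image_Int)
    then show ?thesis using dU fU by auto
  qed
  have "\<forall>w\<in>f ` U'. \<pi> w = w"
  proof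
    fix w assume w: "w \<in> f ` U'"
    have "w \<notin> Q1"
    proof
      assume "w \<in> Q1"
      then have "\<pi> w \<in> Q" using bk W w by auto
      moreover have "\<pi> w \<in> Q'" using e w by auto
      ultimately show False using dQ by auto
    qed
    then show "\<pi> w = w" using fixout W w by auto
  qed
  then have "\<pi> ` f ` U' = f ` U'" by (metis image_cong image_ident)
  then show ?thesis using e by simp
qed


definition perms_of :: "nat \<Rightarrow> nat set \<Rightarrow> (nat \<Rightarrow> nat) set" where
  "perms_of r S = {f \<in> extensional S. bij_betw f S {1..r}}"

definition Omg :: "nat \<Rightarrow> nat set set \<Rightarrow> (nat set \<Rightarrow> nat \<Rightarrow> nat) set" where
  "Omg r H = PiE H (perms_of r)"

definition evs :: "nat \<Rightarrow> nat \<Rightarrow> nat set set \<Rightarrow> (nat set \<times> nat set \<times> nat set \<times> nat set) set" where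
  "evs p r H = {(U,S,S',Q). S \<in> H \<and> S' \<in> H \<and> S \<noteq> S' \<and> U \<subseteq> S \<and> U \<subseteq> S' \<and> card U = p \<and> Q \<subseteq> {1..r} \<and> card Q = p}"

fun ev :: "nat set \<times> nat set \<times> nat set \<times> nat set \<Rightarrow> (nat set \<Rightarrow> nat \<Rightarrow> nat) set" where
  "ev (U,S,S',Q) = {\<sigma>. \<sigma> S ` U = Q \<and> \<sigma> S' ` U = Q}"

fun nbr :: "nat \<Rightarrow> nat \<Rightarrow> nat set set \<Rightarrow> nat set \<times> nat set \<times> nat set \<times> nat set \<Rightarrow> (nat set \<times> nat set \<times> nat set \<times> nat set) set" where
  "nbr p r H (U,S,S',Q) = {i \<in> evs p r H. case i of (U',T,T',Q') \<Rightarrow>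
     (T \<in> {S,S'} \<or> T' \<in> {S,S'}) \<and> (U \<inter> U' \<noteq> {} \<or> Q \<inter> Q' \<noteq> {})}"

lemma finite_perms_of: "finite S \<Longrightarrow> finite (perms_of r S)"
proof -
  assume fS: "finite S"
  have "perms_of r S \<subseteq> PiE S (\<lambda>_. {1..r})"
    unfolding perms_of_def by (auto simp: PiE_iff extensional_def dest: bij_betwE)
  moreover have "finite (PiE S (\<lambda>_. {1..r::nat}))" using fS by (intro finite_PiE) auto
  ultimately show ?thesis using finite_subset by blast
qed

lemma finite_Omg: "uniform_hypergraph r H \<Longrightarrow> finite (Omg r H)"
  unfolding Omg_def uniform_hypergraph_def by (intro finite_PiE) (auto intro: finite_perms_of)

lemma perms_restrict:
  assumes "f \<in> perms_of r X" "bij_betw \<pi> {1..r} {1..r}"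
  shows "restrict (\<pi> \<circ> f) X \<in> perms_of r X"
proof -
  have "bij_betw (\<pi> \<circ> f) X {1..r}" using assms unfolding perms_of_def by (auto intro: bij_betw_trans)
  then have "bij_betw (restrict (\<pi> \<circ> f) X) X {1..r}" by (rule bij_betw_cong[THEN iffD1, rotated]) auto
  then show ?thesis unfolding perms_of_def by auto
qed

lemma switch_main:
  assumes H: "uniform_hypergraph r H"
  and i: "(U,S,S',Q) \<in> evs p r H"
  and J: "J \<subseteq> evs p r H - nbr p r H (U,S,S',Q) - {(U,S,S',Q)}"
  and Q1: "Q1 \<subseteq> {1..r}" "card Q1 = p" and Q2: "Q2 \<subseteq> {1..r}" "card Q2 = p"
  shows "card (ev (U,S,S',Q) \<inter> avoid (Omg r H) ev J)
     \<le> card {\<sigma> \<in> avoid (Omg r H) ev J. \<sigma> S ` U = Q1 \<and> \<sigma> S' ` U = Q2}"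
proof -
  from i have SH: "S \<in> H" "S' \<in> H" "S \<noteq> S'" "U \<subseteq> S" "U \<subseteq> S'" "card U = p"
    "Q \<subseteq> {1..r}" "card Q = p" unfolding evs_def by auto
  have fQ: "finite Q" using SH(7) finite_subset by blast
  have fQ1: "finite Q1" using Q1 finite_subset by blast
  have fQ2: "finite Q2" using Q2 finite_subset by blast
  obtain \<pi>1 :: "nat \<Rightarrow> nat" where p1: "inj \<pi>1" "\<pi>1 ` Q = Q1" "\<forall>x. x \<notin> Q \<union> Q1 \<longrightarrow> \<pi>1 x = x" "\<forall>x\<in>Q1-Q. \<pi>1 x \<in> Q"
    using swap_perm[OF fQ fQ1] SH Q1 by auto
  obtain \<pi>2 :: "nat \<Rightarrow> nat" where p2: "inj \<pi>2" "\<pi>2 ` Q = Q2" "\<forall>x. x \<notin> Q \<union> Q2 \<longrightarrow> \<pi>2 x = x" "\<forall>x\<in>Q2-Q. \<pi>2 x \<in> Q"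
    using swap_perm[OF fQ fQ2] SH Q2 by auto
  have b1: "bij_betw \<pi>1 {1..r} {1..r}" using perm_bij[OF p1 SH(7) Q1(1)] .
  have b2: "bij_betw \<pi>2 {1..r} {1..r}" using perm_bij[OF p2 SH(7) Q2(1)] .
  define \<Phi> where "\<Phi> \<sigma> = \<sigma>(S := restrict (\<pi>1 \<circ> \<sigma> S) S, S' := restrict (\<pi>2 \<circ> \<sigma> S') S')" for \<sigma> :: "nat set \<Rightarrow> nat \<Rightarrow> nat"
  have PhiS: "\<Phi> \<sigma> S = restrict (\<pi>1 \<circ> \<sigma> S) S" for \<sigma> unfolding \<Phi>_def using SH(3) by simp
  have PhiS': "\<Phi> \<sigma> S' = restrict (\<pi>2 \<circ> \<sigma> S') S'" for \<sigma> unfolding \<Phi>_def by simp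
  have PhiO: "X \<noteq> S \<Longrightarrow> X \<noteq> S' \<Longrightarrow> \<Phi> \<sigma> X = \<sigma> X" for \<sigma> X unfolding \<Phi>_def by simp
  have rimg: "\<And>g A B. B \<subseteq> A \<Longrightarrow> restrict g A ` B = g ` B" by (auto simp: image_def)
  define Xs where "Xs = ev (U,S,S',Q) \<inter> avoid (Omg r H) ev J"
  define Ts where "Ts = {\<sigma> \<in> avoid (Omg r H) ev J. \<sigma> S ` U = Q1 \<and> \<sigma> S' ` U = Q2}"
  have inOmg: "\<Phi> \<sigma> \<in> Omg r H" if "\<sigma> \<in> Omg r H" for \<sigma>
  proof -
    have m: "\<And>X. X \<in> H \<Longrightarrow> \<sigma> X \<in> perms_of r X" and ext: "\<sigma> \<in> extensional H"
      using that unfolding Omg_def by (auto simp: PiE_iff)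
    have "\<Phi> \<sigma> X \<in> perms_of r X" if X: "X \<in> H" for X
    proof (cases "X = S")
      case True then show ?thesis using PhiS perms_restrict[OF m[OF SH(1)] b1] by simp
    next
      case False
      show ?thesis
      proof (cases "X = S'")
        case True then show ?thesis using PhiS' perms_restrict[OF m[OF SH(2)] b2] by simp
      next
        case F2: False then show ?thesis using PhiO[OF False F2] m[OF X] by simp
      qed
    qed
    moreover have "\<Phi> \<sigma> \<in> extensional H"
      using ext SH(1,2) unfolding \<Phi>_def extensional_def by auto
    ultimately show ?thesis unfolding Omg_def by (auto simp: PiE_iff)
  qed
  have coord: "\<sigma> X ` U' = Q'"
    if s: "\<sigma> \<in> Xs" and X: "X \<in> H" and U'X: "U' \<subseteq> X" and e: "\<Phi> \<sigma> X ` U' = Q'"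
      and dis: "X \<in> {S,S'} \<Longrightarrow> U \<inter> U' = {} \<and> Q \<inter> Q' = {}" for \<sigma> X U' Q'
  proof -
    have sO: "\<sigma> \<in> Omg r H" and sev: "\<sigma> S ` U = Q" "\<sigma> S' ` U = Q"
      using s unfolding Xs_def avoid_def by auto
    have m: "\<And>X. X \<in> H \<Longrightarrow> \<sigma> X \<in> perms_of r X" using sO unfolding Omg_def by (auto simp: PiE_iff)
    have injX: "\<And>X. X \<in> H \<Longrightarrow> inj_on (\<sigma> X) X" using m unfolding perms_of_def bij_betw_def by auto
    show ?thesis
    proof (cases "X = S")
      case True
      have "\<Phi> \<sigma> X ` U' = \<pi>1 ` \<sigma> S ` U'" using True PhiS rimg U'X by (simp add: image_comp)
      then have "\<pi>1 ` \<sigma> S ` U' = Q'" using e by simp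
      then show ?thesis using switch_coord[OF p1(3) p1(4) injX[OF SH(1)] SH(4) _ sev(1)] dis True U'X by auto
    next
      case False
      show ?thesis
      proof (cases "X = S'")
        case True
        have "\<Phi> \<sigma> X ` U' = \<pi>2 ` \<sigma> S' ` U'" using True PhiS' rimg U'X by (simp add: image_comp)
        then have "\<pi>2 ` \<sigma> S' ` U' = Q'" using e by simp
        then show ?thesis using switch_coord[OF p2(3) p2(4) injX[OF SH(2)] SH(5) _ sev(2)] dis True U'X by auto
      next
        case F2: False then show ?thesis using e PhiO[OF False F2] by simp
      qed
    qed
  qed
  have maps: "\<Phi> \<sigma> \<in> Ts" if s: "\<sigma> \<in> Xs" for \<sigma>
  proof -
    have sO: "\<sigma> \<in> Omg r H" and sev: "\<sigma> S ` U = Q" "\<sigma> S' ` U = Q"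
      and sJ: "\<forall>j\<in>J. \<sigma> \<notin> ev j"
      using s unfolding Xs_def avoid_def by auto
    have "\<Phi> \<sigma> \<notin> ev j" if j: "j \<in> J" for j
    proof
      assume a: "\<Phi> \<sigma> \<in> ev j"
      obtain U' T T' Q' where jj: "j = (U',T,T',Q')" by (cases j) auto
      have jE: "T \<in> H" "T' \<in> H" "U' \<subseteq> T" "U' \<subseteq> T'"
        using J j jj unfolding evs_def by auto
      have nn: "\<not> ((T \<in> {S,S'} \<or> T' \<in> {S,S'}) \<and> (U \<inter> U' \<noteq> {} \<or> Q \<inter> Q' \<noteq> {}))"
        using J j jj by auto
      have a1: "\<Phi> \<sigma> T ` U' = Q'" "\<Phi> \<sigma> T' ` U' = Q'" using a jj by auto
      have "\<sigma> T ` U' = Q'" using coord[OF s jE(1) jE(3) a1(1)] nn by blast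
      moreover have "\<sigma> T' ` U' = Q'" using coord[OF s jE(2) jE(4) a1(2)] nn by blast
      ultimately have "\<sigma> \<in> ev j" using jj by simp
      then show False using sJ j by blast
    qed
    moreover have "\<Phi> \<sigma> S ` U = Q1"
    proof -
      have "\<Phi> \<sigma> S ` U = restrict (\<pi>1 \<circ> \<sigma> S) S ` U" by (simp only: PhiS)
      also have "\<dots> = (\<pi>1 \<circ> \<sigma> S) ` U" by (rule rimg[OF SH(4)])
      also have "\<dots> = \<pi>1 ` \<sigma> S ` U" by (simp only: image_comp)
      finally show ?thesis using sev p1(2) by simp
    qed
    moreover have "\<Phi> \<sigma> S' ` U = Q2"
    proof -
      have "\<Phi> \<sigma> S' ` U = restrict (\<pi>2 \<circ> \<sigma> S') S' ` U" by (simp only: PhiS')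
      also have "\<dots> = (\<pi>2 \<circ> \<sigma> S') ` U" by (rule rimg[OF SH(5)])
      also have "\<dots> = \<pi>2 ` \<sigma> S' ` U" by (simp only: image_comp)
      finally show ?thesis using sev p2(2) by simp
    qed
    ultimately show ?thesis using inOmg[OF sO] unfolding Ts_def avoid_def by auto
  qed
  have inj: "inj_on \<Phi> Xs"
  proof (rule inj_onI)
    fix \<sigma> \<tau> assume s: "\<sigma> \<in> Xs" and t: "\<tau> \<in> Xs" and e: "\<Phi> \<sigma> = \<Phi> \<tau>"
    have ms: "\<And>X. X \<in> H \<Longrightarrow> \<sigma> X \<in> perms_of r X" using s unfolding Xs_def avoid_def Omg_def by (auto simp: PiE_iff)
    have mt: "\<And>X. X \<in> H \<Longrightarrow> \<tau> X \<in> perms_of r X" using t unfolding Xs_def avoid_def Omg_def by (auto simp: PiE_iff)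
    have eq: "\<sigma> X = \<tau> X" for X
    proof (cases "X = S")
      case True
      have r: "restrict (\<pi>1 \<circ> \<sigma> S) S = restrict (\<pi>1 \<circ> \<tau> S) S" using e PhiS by metis
      show ?thesis
      proof
        fix x show "\<sigma> X x = \<tau> X x"
        proof (cases "x \<in> S")
          case True
          then have "\<pi>1 (\<sigma> S x) = \<pi>1 (\<tau> S x)" using fun_cong[OF r, of x] by simp
          then show ?thesis using p1(1) \<open>X = S\<close> by (simp add: inj_eq)
        next
          case False then show ?thesis using ms[OF SH(1)] mt[OF SH(1)] \<open>X = S\<close>
            unfolding perms_of_def extensional_def by auto
        qed
      qed
    next
      case F1: False
      show ?thesis
      proof (cases "X = S'")
        case True
        have r: "restrict (\<pi>2 \<circ> \<sigma> S') S' = restrict (\<pi>2 \<circ> \<tau> S') S'" using e PhiS' by metis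
        show ?thesis
        proof
          fix x show "\<sigma> X x = \<tau> X x"
          proof (cases "x \<in> S'")
            case True
            then have "\<pi>2 (\<sigma> S' x) = \<pi>2 (\<tau> S' x)" using fun_cong[OF r, of x] by simp
            then show ?thesis using p2(1) \<open>X = S'\<close> by (simp add: inj_eq)
          next
            case False then show ?thesis using ms[OF SH(2)] mt[OF SH(2)] \<open>X = S'\<close>
              unfolding perms_of_def extensional_def by auto
          qed
        qed
      next
        case False
        then show ?thesis using e PhiO[OF F1 False] by metis
      qed
    qed
    then show "\<sigma> = \<tau>" by auto
  qed
  have finT: "finite Ts" using finite_Omg[OF H] unfolding Ts_def avoid_def by auto
  have "card Xs \<le> card Ts" using card_inj_on_le[OF inj _ finT] maps by blast
  then show ?thesis unfolding Xs_def Ts_def .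
qed


lemma finite_psets: "finite {Q. Q \<subseteq> (A::'a set) \<and> card Q = p}" if "finite A" for A
proof -
  have "{Q. Q \<subseteq> A \<and> card Q = p} \<subseteq> Pow A" by auto
  then show ?thesis using that finite_subset by (metis finite_Pow_iff)
qed

lemma switch_count:
  assumes H: "uniform_hypergraph r H" and i: "i \<in> evs p r H"
  and J: "J \<subseteq> evs p r H - nbr p r H i - {i}"
  shows "(r choose p)^2 * card (ev i \<inter> avoid (Omg r H) ev J) \<le> card (avoid (Omg r H) ev J)"
proof -
  obtain U S S' Q where ii: "i = (U,S,S',Q)" by (cases i) auto
  define PS where "PS = {Q. Q \<subseteq> {1..r} \<and> card Q = p}"
  define Y where "Y = avoid (Omg r H) ev J"
  define T where "T q = {\<sigma> \<in> Y. \<sigma> S ` U = fst q \<and> \<sigma> S' ` U = snd q}" for q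
  have cPS: "card PS = r choose p" unfolding PS_def using n_subsets[of "{1..r}" p] by simp
  have fPS: "finite PS" unfolding PS_def by (rule finite_psets) simp
  have fY: "finite Y" using finite_Omg[OF H] unfolding Y_def avoid_def by auto
  have le: "card (ev i \<inter> Y) \<le> card (T q)" if q: "q \<in> PS \<times> PS" for q
  proof -
    obtain Q1 Q2 where qq: "q = (Q1,Q2)" by (cases q) auto
    have "Q1 \<subseteq> {1..r}" "card Q1 = p" "Q2 \<subseteq> {1..r}" "card Q2 = p" using q qq unfolding PS_def by auto
    from switch_main[OF H i[unfolded ii] J[unfolded ii] this]
    show ?thesis unfolding T_def Y_def ii qq by simp
  qed
  have "(r choose p)^2 * card (ev i \<inter> Y) = (\<Sum>q\<in>PS\<times>PS. card (ev i \<inter> Y))"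
    by (simp add: cPS card_cartesian_product power2_eq_square)
  also have "\<dots> \<le> (\<Sum>q\<in>PS\<times>PS. card (T q))" by (rule sum_mono) (use le in auto)
  also have "\<dots> = card (\<Union>q\<in>PS\<times>PS. T q)"
  proof (rule card_UN_disjoint[symmetric])
    show "finite (PS \<times> PS)" using fPS by simp
    show "\<forall>q\<in>PS \<times> PS. finite (T q)" using fY unfolding T_def by auto
    show "\<forall>q\<in>PS \<times> PS. \<forall>q'\<in>PS \<times> PS. q \<noteq> q' \<longrightarrow> T q \<inter> T q' = {}"
      unfolding T_def by (auto simp: prod_eq_iff)
  qed
  also have "\<dots> \<le> card Y" by (rule card_mono) (auto simp: T_def fY)
  finally show ?thesis unfolding Y_def .
qed

lemma meet_count:
  assumes fX: "finite X" and cX: "card X = r" and UX: "U \<subseteq> X" and cU: "card U = p"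
  shows "card {U'. U' \<subseteq> X \<and> card U' = p \<and> U \<inter> U' \<noteq> {}} \<le> p * (r - 1 choose (p - 1))"
proof -
  have fU: "finite U" using UX fX finite_subset by blast
  have sub: "{U'. U' \<subseteq> X \<and> card U' = p \<and> U \<inter> U' \<noteq> {}} \<subseteq> (\<Union>u\<in>U. {U'. U' \<subseteq> X \<and> card U' = p \<and> u \<in> U'})"
    by auto
  have each: "card {U'. U' \<subseteq> X \<and> card U' = p \<and> u \<in> U'} \<le> r - 1 choose (p - 1)" if u: "u \<in> U" for u
  proof -
    have "{U'. U' \<subseteq> X \<and> card U' = p \<and> u \<in> U'} \<subseteq> insert u ` {V. V \<subseteq> X - {u} \<and> card V = p - 1}"
    proof
      fix U' assume a: "U' \<in> {U'. U' \<subseteq> X \<and> card U' = p \<and> u \<in> U'}"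
      then have "U' = insert u (U' - {u})" by auto
      moreover have "U' - {u} \<subseteq> X - {u}" using a by auto
      moreover have "card (U' - {u}) = p - 1"
      proof -
        have "finite U'" using a fX finite_subset by blast
        then show ?thesis using a by (simp add: card_Diff_singleton)
      qed
      ultimately show "U' \<in> insert u ` {V. V \<subseteq> X - {u} \<and> card V = p - 1}" by blast
    qed
    then have "card {U'. U' \<subseteq> X \<and> card U' = p \<and> u \<in> U'} \<le> card (insert u ` {V. V \<subseteq> X - {u} \<and> card V = p - 1})"
      by (intro card_mono finite_imageI finite_psets) (use fX in auto)
    also have "\<dots> \<le> card {V. V \<subseteq> X - {u} \<and> card V = p - 1}" by (rule card_image_le) (intro finite_psets, use fX in auto)
    also have "\<dots> = card (X - {u}) choose (p - 1)" using n_subsets fX by blast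
    also have "card (X - {u}) = r - 1" using u UX cX fX by auto
    finally show ?thesis .
  qed
  have "card {U'. U' \<subseteq> X \<and> card U' = p \<and> U \<inter> U' \<noteq> {}} \<le> card (\<Union>u\<in>U. {U'. U' \<subseteq> X \<and> card U' = p \<and> u \<in> U'})"
  proof (rule card_mono[OF _ sub])
    have "(\<Union>u\<in>U. {U'. U' \<subseteq> X \<and> card U' = p \<and> u \<in> U'}) \<subseteq> Pow X" by auto
    then show "finite (\<Union>u\<in>U. {U'. U' \<subseteq> X \<and> card U' = p \<and> u \<in> U'})" using fX finite_subset by blast
  qed
  also have "\<dots> \<le> (\<Sum>u\<in>U. card {U'. U' \<subseteq> X \<and> card U' = p \<and> u \<in> U'})" by (rule card_UN_le[OF fU])
  also have "\<dots> \<le> (\<Sum>u\<in>U. r - 1 choose (p - 1))" by (rule sum_mono) (use each in auto)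
  also have "\<dots> = p * (r - 1 choose (p - 1))" using cU by simp
  finally show ?thesis .
qed

lemma deg_le:
  assumes H: "uniform_hypergraph r H" and mk: "max_p_degree p H \<le> k"
  and U'X: "U' \<subseteq> X" and XH: "X \<in> H" and cU: "card U' = p"
  shows "card {T\<in>H. U' \<subseteq> T} \<le> k"
proof -
  have fV: "finite (vertices H)" using H unfolding uniform_hypergraph_def vertices_def by auto
  define M where "M = {card {S\<in>H. U \<subseteq> S} | U. U \<subseteq> vertices H \<and> card U = p} \<union> {0}"
  have "M \<subseteq> (\<lambda>U. card {S\<in>H. U \<subseteq> S}) ` Pow (vertices H) \<union> {0}" unfolding M_def by auto
  then have fM: "finite M" using fV finite_subset by blast
  have "U' \<subseteq> vertices H" using U'X XH unfolding vertices_def by auto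
  then have "card {T\<in>H. U' \<subseteq> T} \<in> M" unfolding M_def using cU by auto
  then have "card {T\<in>H. U' \<subseteq> T} \<le> Max M" using Max_ge[OF fM] by blast
  also have "Max M = max_p_degree p H" unfolding M_def max_p_degree_def by simp
  finally show ?thesis using mk by linarith
qed

lemma card_Sigma_le:
  assumes "finite A" "\<And>a. a \<in> A \<Longrightarrow> finite (B a) \<and> card (B a) \<le> m"
  shows "card (Sigma A B) \<le> card A * m"
proof -
  have "card (Sigma A B) = (\<Sum>a\<in>A. card (B a))" using assms by (intro card_SigmaI) auto
  also have "\<dots> \<le> (\<Sum>a\<in>A. m)" using assms by (intro sum_mono) auto
  finally show ?thesis by simp
qed


lemma nbr_count:
  assumes H: "uniform_hypergraph r H" and mk: "max_p_degree p H \<le> k" and i: "i \<in> evs p r H"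
  shows "card (nbr p r H i) \<le> 8 * (p * (r - 1 choose (p - 1))) * k * (r choose p)"
proof -
  obtain U S S' Q where ii: "i = (U,S,S',Q)" by (cases i) auto
  from i have SH: "S \<in> H" "S' \<in> H" "U \<subseteq> S" "U \<subseteq> S'" "card U = p" "Q \<subseteq> {1..r}" "card Q = p"
    unfolding ii evs_def by auto
  have fH: "finite H" and cH: "\<And>X. X \<in> H \<Longrightarrow> finite X \<and> card X = r"
    using H unfolding uniform_hypergraph_def by auto
  define C where "C = r choose p"
  define M where "M = p * (r - 1 choose (p - 1))"
  define PS where "PS = {Q'. Q' \<subseteq> {1..r} \<and> card Q' = p}"
  define QM where "QM = {Q'. Q' \<subseteq> {1..r} \<and> card Q' = p \<and> Q \<inter> Q' \<noteq> {}}"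
  define UA where "UA X = {U'. U' \<subseteq> X \<and> card U' = p}" for X :: "nat set"
  define UM where "UM X = {U'. U' \<subseteq> X \<and> card U' = p \<and> U \<inter> U' \<noteq> {}}" for X :: "nat set"
  define D where "D U' = {T\<in>H. U' \<subseteq> T}" for U' :: "nat set"
  have fPS: "finite PS" unfolding PS_def by (rule finite_psets) simp
  have cPS: "card PS = C" unfolding PS_def C_def using n_subsets[of "{1..r}" p] by simp
  have fQM: "finite QM" using fPS unfolding QM_def PS_def by (rule finite_subset[rotated]) auto
  have cQM: "card QM \<le> M" unfolding QM_def M_def using meet_count[of "{1..r}" r Q p] SH by simp
  have fUA: "X \<in> H \<Longrightarrow> finite (UA X)" for X unfolding UA_def using cH by (intro finite_psets) auto
  have cUA: "X \<in> H \<Longrightarrow> card (UA X) = C" for X unfolding UA_def C_def using cH n_subsets by metis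
  have fUM: "X \<in> H \<Longrightarrow> finite (UM X)" for X
    using fUA[of X] unfolding UM_def UA_def by (rule finite_subset[rotated]) auto
  have cUM: "X \<in> {S,S'} \<Longrightarrow> card (UM X) \<le> M" for X
    unfolding UM_def M_def using meet_count[of X r U p] SH cH by auto
  have fD: "finite (D U')" for U' unfolding D_def using fH by auto
  have cD: "X \<in> H \<Longrightarrow> U' \<subseteq> X \<Longrightarrow> card U' = p \<Longrightarrow> card (D U') \<le> k" for X U'
    unfolding D_def using deg_le[OF H mk] by blast
  define f1 :: "nat set \<times> nat set \<times> nat set \<times> nat set \<Rightarrow> nat set \<times> nat set \<times> nat set \<times> nat set"
    where "f1 = (\<lambda>(X,U',T',Q'). (U',X,T',Q'))"
  define f2 :: "nat set \<times> nat set \<times> nat set \<times> nat set \<Rightarrow> nat set \<times> nat set \<times> nat set \<times> nat set"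
    where "f2 = (\<lambda>(X,U',T,Q'). (U',T,X,Q'))"
  define S1 where "S1 = Sigma {S,S'} (\<lambda>X. Sigma (UM X) (\<lambda>U'. D U' \<times> PS))"
  define S2 where "S2 = Sigma {S,S'} (\<lambda>X. Sigma (UA X) (\<lambda>U'. D U' \<times> QM))"
  have c2: "card {S,S'} \<le> 2" by (simp add: card_insert_if)
  have cS1: "finite S1 \<and> card S1 \<le> 2 * (M * (k * C))"
  proof -
    have inner: "finite (Sigma (UM X) (\<lambda>U'. D U' \<times> PS)) \<and> card (Sigma (UM X) (\<lambda>U'. D U' \<times> PS)) \<le> M * (k * C)"
      if X: "X \<in> {S,S'}" for X
    proof -
      have XH: "X \<in> H" using X SH by auto
      have "\<And>U'. U' \<in> UM X \<Longrightarrow> finite (D U' \<times> PS) \<and> card (D U' \<times> PS) \<le> k * C"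
      proof -
        fix U' assume "U' \<in> UM X"
        then have "card (D U') \<le> k" using cD[OF XH] unfolding UM_def by auto
        then show "finite (D U' \<times> PS) \<and> card (D U' \<times> PS) \<le> k * C"
          using fD fPS cPS by (simp add: card_cartesian_product)
      qed
      then have "card (Sigma (UM X) (\<lambda>U'. D U' \<times> PS)) \<le> card (UM X) * (k * C)"
        using fUM[OF XH] by (intro card_Sigma_le) auto
      also have "\<dots> \<le> M * (k * C)" using cUM[OF X] by (intro mult_right_mono) auto
      finally show ?thesis using fUM[OF XH] fD fPS by auto
    qed
    have "card S1 \<le> card {S,S'} * (M * (k * C))" unfolding S1_def by (intro card_Sigma_le) (use inner in auto)
    also have "\<dots> \<le> 2 * (M * (k * C))" using c2 by (intro mult_right_mono) auto
    finally show ?thesis unfolding S1_def using inner by auto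
  qed
  have cS2: "finite S2 \<and> card S2 \<le> 2 * (C * (k * M))"
  proof -
    have inner: "finite (Sigma (UA X) (\<lambda>U'. D U' \<times> QM)) \<and> card (Sigma (UA X) (\<lambda>U'. D U' \<times> QM)) \<le> C * (k * M)"
      if X: "X \<in> {S,S'}" for X
    proof -
      have XH: "X \<in> H" using X SH by auto
      have "\<And>U'. U' \<in> UA X \<Longrightarrow> finite (D U' \<times> QM) \<and> card (D U' \<times> QM) \<le> k * M"
      proof -
        fix U' assume "U' \<in> UA X"
        then have "card (D U') \<le> k" using cD[OF XH] unfolding UA_def by auto
        then show "finite (D U' \<times> QM) \<and> card (D U' \<times> QM) \<le> k * M"
          using fD fQM cQM by (simp add: card_cartesian_product mult_le_mono)
      qed
      then have "card (Sigma (UA X) (\<lambda>U'. D U' \<times> QM)) \<le> card (UA X) * (k * M)"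
        using fUA[OF XH] by (intro card_Sigma_le) auto
      also have "\<dots> = C * (k * M)" using cUA[OF XH] by simp
      finally show ?thesis using fUA[OF XH] fD fQM by auto
    qed
    have "card S2 \<le> card {S,S'} * (C * (k * M))" unfolding S2_def by (intro card_Sigma_le) (use inner in auto)
    also have "\<dots> \<le> 2 * (C * (k * M))" using c2 by (intro mult_right_mono) auto
    finally show ?thesis unfolding S2_def using inner by auto
  qed
  have sub: "nbr p r H i \<subseteq> f1 ` S1 \<union> f1 ` S2 \<union> f2 ` S1 \<union> f2 ` S2"
  proof
    fix j assume j: "j \<in> nbr p r H i"
    obtain U' T T' Q' where jj: "j = (U',T,T',Q')" by (cases j) auto
    have jE: "T \<in> H" "T' \<in> H" "U' \<subseteq> T" "U' \<subseteq> T'" "card U' = p" "Q' \<subseteq> {1..r}" "card Q' = p"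
      using j unfolding jj ii by (auto simp: evs_def)
    have cond: "(T \<in> {S,S'} \<or> T' \<in> {S,S'}) \<and> (U \<inter> U' \<noteq> {} \<or> Q \<inter> Q' \<noteq> {})"
      using j unfolding jj ii by auto
    have inD: "T' \<in> D U'" "T \<in> D U'" using jE unfolding D_def by auto
    have inPS: "Q' \<in> PS" using jE unfolding PS_def by auto
    have e1: "j = f1 (T,U',T',Q')" unfolding f1_def jj by simp
    have e2: "j = f2 (T',U',T,Q')" unfolding f2_def jj by simp
    consider (a) "T \<in> {S,S'}" "U \<inter> U' \<noteq> {}" | (b) "T \<in> {S,S'}" "Q \<inter> Q' \<noteq> {}"
      | (c) "T' \<in> {S,S'}" "U \<inter> U' \<noteq> {}" | (d) "T' \<in> {S,S'}" "Q \<inter> Q' \<noteq> {}" using cond by blast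
    then show "j \<in> f1 ` S1 \<union> f1 ` S2 \<union> f2 ` S1 \<union> f2 ` S2"
    proof cases
      case a
      have "(T,U',T',Q') \<in> S1" unfolding S1_def UM_def using a jE inD inPS by auto
      then show ?thesis using e1 by blast
    next
      case b
      have "(T,U',T',Q') \<in> S2" unfolding S2_def UA_def QM_def using b jE inD by auto
      then show ?thesis using e1 by blast
    next
      case c
      have "(T',U',T,Q') \<in> S1" unfolding S1_def UM_def using c jE inD inPS by auto
      then show ?thesis using e2 by blast
    next
      case d
      have "(T',U',T,Q') \<in> S2" unfolding S2_def UA_def QM_def using d jE inD by auto
      then show ?thesis using e2 by blast
    qed
  qed
  have fin: "finite (f1 ` S1 \<union> f1 ` S2 \<union> f2 ` S1 \<union> f2 ` S2)" using cS1 cS2 by auto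
  have "card (nbr p r H i) \<le> card (f1 ` S1 \<union> f1 ` S2 \<union> f2 ` S1 \<union> f2 ` S2)"
    by (rule card_mono[OF fin sub])
  also have "\<dots> \<le> card (f1 ` S1) + card (f1 ` S2) + card (f2 ` S1) + card (f2 ` S2)"
    by (meson add_le_mono card_Un_le order_trans order_refl)
  also have "\<dots> \<le> card S1 + card S2 + card S1 + card S2"
    by (intro add_le_mono card_image_le) (use cS1 cS2 in auto)
  also have "\<dots> \<le> 2 * (M * (k * C)) + 2 * (C * (k * M)) + 2 * (M * (k * C)) + 2 * (C * (k * M))"
    using cS1 cS2 by (intro add_le_mono) auto
  also have "\<dots> = 8 * M * k * C" by (simp add: algebra_simps)
  finally show ?thesis unfolding M_def C_def .
qed


lemma Omg_nonempty:
  assumes H: "uniform_hypergraph r H" shows "Omg r H \<noteq> {}"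
proof -
  have "perms_of r S \<noteq> {}" if S: "S \<in> H" for S
  proof -
    have "finite S" "card S = r" using H S unfolding uniform_hypergraph_def by auto
    then obtain h where h: "bij_betw h S {1..r}" using finite_same_card_bij[of S "{1..r}"] by auto
    have "bij_betw (restrict h S) S {1..r}" using h by (rule bij_betw_cong[THEN iffD1, rotated]) auto
    then have "restrict h S \<in> perms_of r S" unfolding perms_of_def by auto
    then show ?thesis by auto
  qed
  then show ?thesis unfolding Omg_def by (auto simp: PiE_eq_empty_iff)
qed

lemma finite_evs:
  assumes H: "uniform_hypergraph r H" shows "finite (evs p r H)"
proof -
  have fH: "finite H" and fV: "finite (\<Union>H)" using H unfolding uniform_hypergraph_def by auto
  have "evs p r H \<subseteq> Pow (\<Union>H) \<times> H \<times> H \<times> Pow {1..r}" unfolding evs_def by auto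
  moreover have "finite (Pow (\<Union>H) \<times> H \<times> H \<times> Pow {1..r})" using fH fV by auto
  ultimately show ?thesis using finite_subset by blast
qed

theorem theorem1:
  fixes p k :: nat
  assumes "p > 0" and "k > 0"
  shows "\<exists>r0. \<forall>r\<ge>r0. \<forall>H :: nat set set.
           uniform_hypergraph r H \<and> max_p_degree p H \<le> k \<longrightarrow>
           (\<exists>\<sigma>. orientation r H \<sigma> \<and> p_equitable p r H \<sigma>)"
proof (intro exI[of _ "32 * k * p^2"] allI impI)
  fix r :: nat and H :: "nat set set"
  assume r: "32 * k * p^2 \<le> r" and a: "uniform_hypergraph r H \<and> max_p_degree p H \<le> k"
  have H: "uniform_hypergraph r H" and mk: "max_p_degree p H \<le> k" using a by auto
  have p0: "p > 0" and k0: "k > 0" using assms by auto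
  define C where "C = r choose p"
  define C1 where "C1 = r - 1 choose (p - 1)"
  have "32 * p \<le> 32 * k * p^2" using p0 k0 by (simp add: power2_eq_square)
  then have rp: "p < r" using r p0 by linarith
  have C1pos: "C1 \<ge> 1" unfolding C1_def using rp by (simp add: Suc_le_eq)
  have key: "p * C = r * C1" unfolding C_def C1_def using times_binomial_minus1_eq[OF p0] by simp
  have C2: "C \<ge> 2"
  proof -
    have "r * C1 \<ge> r" using C1pos by simp
    then have pc: "p * C > p" using key rp by linarith
    show ?thesis
    proof (rule ccontr)
      assume "\<not> C \<ge> 2" then have "C \<le> 1" by simp
      then have "p * C \<le> p * 1" by (rule mult_le_mono2)
      then show False using pc by simp
    qed
  qed
  have main: "32 * p * k * C1 \<le> C"
  proof -
    have "r * (32 * p * k * C1) = 32 * k * p * (p * C)" using key by (simp add: algebra_simps)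
    also have "\<dots> = (32 * k * p^2) * C" by (simp add: power2_eq_square algebra_simps)
    also have "\<dots> \<le> r * C" using r by (intro mult_right_mono) auto
    finally show ?thesis using rp by simp
  qed
  define \<epsilon> :: real where "\<epsilon> = 1 / (real C)^2"
  define d where "d = 8 * (p * C1) * k * C"
  have Cpos: "real C > 0" using C2 by simp
  have "avoid (Omg r H) ev (evs p r H) \<noteq> {}"
  proof (rule lll[where N = "nbr p r H" and d = d and \<epsilon> = \<epsilon>])
    show "finite (Omg r H)" using finite_Omg[OF H] .
    show "Omg r H \<noteq> {}" using Omg_nonempty[OF H] .
    show "finite (evs p r H)" using finite_evs[OF H] .
    show "finite (nbr p r H i) \<and> card (nbr p r H i) \<le> d" if "i \<in> evs p r H" for i
    proof
      obtain U S S' Q where ii: "i = (U,S,S',Q)" by (cases i) auto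
      show "finite (nbr p r H i)" unfolding ii using finite_evs[OF H] by auto
      show "card (nbr p r H i) \<le> d" unfolding d_def C_def C1_def using nbr_count[OF H mk that] .
    qed
    show "real (card (ev i \<inter> avoid (Omg r H) ev J)) \<le> \<epsilon> * real (card (avoid (Omg r H) ev J))"
      if i: "i \<in> evs p r H" and J: "J \<subseteq> evs p r H - nbr p r H i - {i}" for i J
    proof -
      have "C^2 * card (ev i \<inter> avoid (Omg r H) ev J) \<le> card (avoid (Omg r H) ev J)"
        using switch_count[OF H i J] unfolding C_def .
      then have "(real C)^2 * real (card (ev i \<inter> avoid (Omg r H) ev J)) \<le> real (card (avoid (Omg r H) ev J))"
        by (metis of_nat_le_iff of_nat_mult of_nat_power)
      then show ?thesis unfolding \<epsilon>_def using Cpos by (simp add: field_simps)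
    qed
    show "0 \<le> \<epsilon>" unfolding \<epsilon>_def by simp
    show "4 * \<epsilon> * real d \<le> 1"
    proof -
      have m: "real (32 * p * k * C1) \<le> real C" using main by linarith
      have "4 * \<epsilon> * real d = real (32 * p * k * C1) * real C / (real C)^2"
        unfolding \<epsilon>_def d_def by (simp add: field_simps)
      also have "\<dots> = real (32 * p * k * C1) / real C" using Cpos by (simp add: power2_eq_square)
      also have "\<dots> \<le> 1" using m Cpos by simp
      finally show ?thesis .
    qed
    show "2 * \<epsilon> < 1"
    proof -
      have "real C \<ge> 2" using C2 by simp
      then have "(real C)^2 \<ge> 2^2" by (rule power_mono) auto
      then have "(real C)^2 \<ge> 4" by simp
      then have pos: "(real C)^2 > 0" by linarith
      have "2 * \<epsilon> = 2 / (real C)^2" unfolding \<epsilon>_def by simp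
      also have "\<dots> < 1" using \<open>(real C)^2 \<ge> 4\<close> pos by (simp add: divide_less_eq)
      finally show ?thesis .
    qed
  qed
  then obtain \<sigma> where s: "\<sigma> \<in> avoid (Omg r H) ev (evs p r H)" by auto
  have sO: "\<sigma> \<in> Omg r H" and sA: "\<forall>j\<in>evs p r H. \<sigma> \<notin> ev j" using s unfolding avoid_def by auto
  have orient: "orientation r H \<sigma>"
    using sO unfolding Omg_def orientation_def perms_of_def by (auto simp: PiE_iff)
  have fH: "finite H" using H unfolding uniform_hypergraph_def by auto
  have le1: "pos_degree H \<sigma> P U \<le> 1" if P: "P \<subseteq> {1..r}" "card P = p" and U: "card U = p" for P U
  proof -
    have fin: "finite {S\<in>H. U \<subseteq> S \<and> \<sigma> S ` U = P}" using fH by auto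
    have "\<forall>S1\<in>{S\<in>H. U \<subseteq> S \<and> \<sigma> S ` U = P}. \<forall>S2\<in>{S\<in>H. U \<subseteq> S \<and> \<sigma> S ` U = P}. S1 = S2"
    proof (intro ballI)
      fix S1 S2 assume s1: "S1 \<in> {S\<in>H. U \<subseteq> S \<and> \<sigma> S ` U = P}" and s2: "S2 \<in> {S\<in>H. U \<subseteq> S \<and> \<sigma> S ` U = P}"
      show "S1 = S2"
      proof (rule ccontr)
        assume ne: "S1 \<noteq> S2"
        have "(U,S1,S2,P) \<in> evs p r H" using s1 s2 ne P U unfolding evs_def by auto
        moreover have "\<sigma> \<in> ev (U,S1,S2,P)" using s1 s2 by auto
        ultimately show False using sA by blast
      qed
    qed
    then show ?thesis unfolding pos_degree_def using card_le_Suc0_iff_eq[OF fin] by simp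
  qed
  have "p_equitable p r H \<sigma>"
    unfolding p_equitable_def
  proof (intro allI impI)
    fix U P P' assume c: "U \<subseteq> vertices H \<and> P \<subseteq> {1..r} \<and> P' \<subseteq> {1..r} \<and> card U = p \<and> card P = p \<and> card P' = p"
    have "pos_degree H \<sigma> P U \<le> 1" "pos_degree H \<sigma> P' U \<le> 1" using le1 c by auto
    then show "\<bar>int (pos_degree H \<sigma> P U) - int (pos_degree H \<sigma> P' U)\<bar> \<le> 1" by linarith
  qed
  then show "\<exists>\<sigma>. orientation r H \<sigma> \<and> p_equitable p r H \<sigma>" using orient by blast
qed

end
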